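(* Let $p\ge5$, $1\le a\le p-4$, $s_\varepsilon\in\{0,\dots,p-2\}$, and let $k=k_\bullet(p-1)+k_\varepsilon$ with $k_\bullet\ge1$. Then $\mathrm M(k)\le\lfloor\log_p k_\bullet\rfloor+3$.
   Context: $v_p(p)=1$. $\{m\}\in\{0,\dots,p-2\}$ is the residue of $m$ mod $p-1$. $k_\varepsilon=2+\{a+2s_\varepsilon\}$, $\delta_\varepsilon=\lfloor(s_\varepsilon+\{a+s_\varepsilon\})/(p-1)\rfloor$; if $a+s_\varepsilon<p-1$, $t_1=s_\varepsilon+\delta_\varepsilon$, $t_2=a+s_\varepsilon+\delta_\varepsilon+2$; else $t_1=\{a+s_\varepsilon\}+\delta_\varepsilon+1$, $t_2=a+s_\varepsilon+\delta_\varepsilon+1$. For $k\ge2$, $k=k_\bullet(p-1)+k_\varepsilon$: $d_k^{\mathrm{Iw}}=2k_\bullet+2-2\delta_\varepsilon$; $d_k^{\mathrm{ur}}=2\lfloor(k_\bullet-t_1)/(p+1)\rfloor+1+\eta_k$ ($\eta_k=1$ if $k_\bullet-(p+1)\lfloor(k_\bullet-t_1)/(p+1)\rfloor\ge t_2$, else $0$). $w_k=\exp(p(k-2))-1$ (so $v_p(w_k-w_{k'})=1+v_p(k-k')$). For $n\ge1$, $m_n(k)=\min\{n-d_k^{\mathrm{ur}},d_k^{\mathrm{Iw}}-d_k^{\mathrm{ur}}-n\}$ if $d_k^{\mathrm{ur}}<n<d_k^{\mathrm{Iw}}-d_k^{\mathrm{ur}}$, else $0$. $\mathrm M(k)=\max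 v_p(w_{k'}-w_k)$ over all $k'\ne k$, $k'\ge2$, $k'\equiv k_\varepsilon\pmod{p-1}$, such that $m_n(k')\ne0$ for some $1\le n\le d_k^{\mathrm{Iw}}$. *)

theory Defs
  imports Complex_Main "HOL-Computational_Algebra.Primes" "HOL-Library.Extended_Nat"
begin

definition resid :: "nat \<Rightarrow> nat \<Rightarrow> nat" where
  "resid p m = m mod (p - 1)"

definition keps :: "nat \<Rightarrow> nat \<Rightarrow> nat \<Rightarrow> nat" where
  "keps p a s = 2 + resid p (a + 2 * s)"

definition deltaeps :: "nat \<Rightarrow> nat \<Rightarrow> nat \<Rightarrow> nat" where
  "deltaeps p a s = (s + resid p (a + s)) div (p - 1)"

definition t1 :: "nat \<Rightarrow> nat \<Rightarrow> nat \<Rightarrow> nat" where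
  "t1 p a s = (if a + s < p - 1 then s + deltaeps p a s
               else resid p (a + s) + deltaeps p a s + 1)"

definition t2 :: "nat \<Rightarrow> nat \<Rightarrow> nat \<Rightarrow> nat" where
  "t2 p a s = (if a + s < p - 1 then a + s + deltaeps p a s + 2
               else a + s + deltaeps p a s + 1)"

definition kbul :: "nat \<Rightarrow> nat \<Rightarrow> nat \<Rightarrow> nat \<Rightarrow> nat" where
  "kbul p a s k = (k - keps p a s) div (p - 1)"

definition dIw :: "nat \<Rightarrow> nat \<Rightarrow> nat \<Rightarrow> nat \<Rightarrow> int" where
  "dIw p a s k = 2 * int (kbul p a s k) + 2 - 2 * int (deltaeps p a s)"

definition qur :: "nat \<Rightarrow> nat \<Rightarrow> nat \<Rightarrow> nat \<Rightarrow> int" where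
  "qur p a s k = \<lfloor>(real (kbul p a s k) - real (t1 p a s)) / real (p + 1)\<rfloor>"

definition eta :: "nat \<Rightarrow> nat \<Rightarrow> nat \<Rightarrow> nat \<Rightarrow> int" where
  "eta p a s k = (if int (kbul p a s k) - int (p + 1) * qur p a s k \<ge> int (t2 p a s) then 1 else 0)"

definition dur :: "nat \<Rightarrow> nat \<Rightarrow> nat \<Rightarrow> nat \<Rightarrow> int" where
  "dur p a s k = 2 * qur p a s k + 1 + eta p a s k"

definition mn :: "nat \<Rightarrow> nat \<Rightarrow> nat \<Rightarrow> int \<Rightarrow> nat \<Rightarrow> int" where
  "mn p a s n k = (if dur p a s k < n \<and> n < dIw p a s k - dur p a s k
                   then min (n - dur p a s k) (dIw p a s k - dur p a s k - n) else 0)"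

text \<open>v_p(w_k - w_k') = 1 + v_p(k - k') for k \<noteq> k' (w_k = exp(p(k-2)) - 1).\<close>
definition vw :: "nat \<Rightarrow> nat \<Rightarrow> nat \<Rightarrow> nat" where
  "vw p k k' = 1 + multiplicity (int p) (int k' - int k)"

text \<open>M(k) as a supremum in extended naturals (empty set gives 0).\<close>
definition MM :: "nat \<Rightarrow> nat \<Rightarrow> nat \<Rightarrow> nat \<Rightarrow> enat" where
  "MM p a s k = Sup {enat (vw p k k') | k'. k' \<noteq> k \<and> k' \<ge> 2 \<and>
       k' mod (p - 1) = keps p a s mod (p - 1) \<and>
       (\<exists>n::int. 1 \<le> n \<and> n \<le> dIw p a s k \<and> mn p a s n k' \<noteq> 0)}"

end

theory Submission
  imports Defs
begin

lemma pow_log_bound: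
  fixes p kb :: nat
  assumes "p \<ge> 2" "kb \<ge> 1"
  shows "kb < p ^ (nat \<lfloor>log (real p) (real kb)\<rfloor> + 1)"
proof -
  let ?l = "log (real p) (real kb)"
  have l0: "?l \<ge> 0" using assms by simp
  have "?l < real (nat \<lfloor>?l\<rfloor> + 1)" using l0 by linarith
  hence "real p powr ?l < real p powr real (nat \<lfloor>?l\<rfloor> + 1)"
    using assms by (intro powr_less_mono) auto
  moreover have "real p powr ?l = real kb" using assms by simp
  moreover have "real p powr real (nat \<lfloor>?l\<rfloor> + 1) = real p ^ (nat \<lfloor>?l\<rfloor> + 1)"
    by (rule powr_realpow) (use assms in simp)
  ultimately have "real kb < real (p ^ (nat \<lfloor>?l\<rfloor> + 1))" by simp
  thus ?thesis by linarith
qed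

theorem lemma3p9:
  fixes p a s kb :: nat
  assumes "prime p" and "p \<ge> 5" and "1 \<le> a" and "a \<le> p - 4" and "s \<le> p - 2"
    and "kb \<ge> 1"
  shows "MM p a s (kb * (p - 1) + keps p a s) \<le> enat (nat \<lfloor>log (real p) (real kb)\<rfloor> + 3)"
proof -
  define K where "K = keps p a s"
  define k where "k = kb * (p - 1) + K"
  define L where "L = nat \<lfloor>log (real p) (real kb)\<rfloor>"
  have p1: "p - 1 > 0" using assms by simp
  have res: "resid p m < p - 1" for m unfolding resid_def using p1 by simp
  have Kle: "K \<le> p" using res[of "a + 2*s"] unfolding K_def keps_def using assms by simp
  have del: "deltaeps p a s \<le> 1"
  proof -
    have "s + resid p (a + s) < 2 * (p - 1)" using res[of "a+s"] assms by simp
    thus ?thesis unfolding deltaeps_def using p1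
      by (metis One_nat_def less_Suc_eq_le less_mult_imp_div_less mult.commute Suc_1)
  qed
  have t1le: "t1 p a s \<le> p" using res[of "a+s"] del assms unfolding t1_def by auto
  have kbk: "kbul p a s k = kb" unfolding kbul_def k_def K_def using p1 by simp
  have Lb: "kb < p ^ (L + 1)" unfolding L_def using pow_log_bound assms by simp
  have bound: "vw p k k' \<le> L + 3"
    if k'ne: "k' \<noteq> k" and k'mod: "k' mod (p - 1) = K mod (p - 1)"
      and n1: "1 \<le> n" and n2: "n \<le> dIw p a s k" and mnz: "mn p a s n k' \<noteq> 0" for k' n
  proof -
    define m where "m = multiplicity (int p) (int k' - int k)"
    have pm: "(int p) ^ m dvd (int k' - int k)" unfolding m_def by (rule multiplicity_dvd)
    have ppos: "p > 0" using assms by simp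
    have "p ^ m < p ^ (L + 3)"
    proof (cases "k' < k")
      case True
      have "(int p) ^ m dvd int (k - k')" using pm True
        by (metis dvd_minus_iff minus_diff_eq of_nat_diff less_imp_le)
      hence "p ^ m dvd (k - k')" by (metis of_nat_dvd_iff of_nat_power)
      hence "p ^ m \<le> k - k'" using True by (intro dvd_imp_le) auto
      also have "\<dots> \<le> k" by simp
      also have "k < p * p * kb"
      proof -
        have "k \<le> kb * (p - 1) + p" unfolding k_def using Kle by simp
        also have "\<dots> < p * p * kb"
        proof -
          have "kb * (p - 1) \<le> kb * p" by simp
          moreover have "p \<le> p * kb" using assms by simp
          ultimately have "kb * (p - 1) + p \<le> kb * p + p * kb" by linarith
          also have "\<dots> = 2 * p * kb" by simp
          also have "\<dots> < p * p * kb" using assms by simp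
          finally show ?thesis .
        qed
        finally show ?thesis .
      qed
      also have "p * p * kb < p * p * p ^ (L + 1)" using Lb ppos by simp
      also have "\<dots> = p ^ (L + 3)" by (simp add: power_add eval_nat_numeral)
      finally show ?thesis .
    next
      case False
      hence gt: "k' > k" using k'ne by simp
      hence "k' \<ge> K" unfolding k_def by simp
      hence "(p - 1) dvd (k' - K)" using k'mod by (simp add: mod_eq_dvd_iff_nat)
      then obtain kb' where kb': "k' - K = (p - 1) * kb'" by blast
      have k'eq: "k' = kb' * (p - 1) + K" using kb' \<open>k' \<ge> K\<close> by (simp add: mult.commute)
      have kbk': "kbul p a s k' = kb'" unfolding kbul_def K_def[symmetric] k'eq using p1 by simp
      have kbgt: "kb' > kb" using gt unfolding k_def k'eq using p1 by simp
      have diff: "int k' - int k = int (kb' - kb) * int (p - 1)"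
      proof -
        have "k' - k = (kb' - kb) * (p - 1)" unfolding k'eq k_def by (simp add: diff_mult_distrib)
        hence "int (k' - k) = int (kb' - kb) * int (p - 1)" by simp
        thus ?thesis using gt by (simp add: of_nat_diff)
      qed
      have cop: "coprime ((int p) ^ m) (int (p - 1))"
      proof -
        have "coprime p (p - 1)" using ppos by (rule coprime_diff_one_right_nat)
        hence "coprime (int p) (int (p - 1))" by simp
        thus ?thesis by simp
      qed
      have "(int p) ^ m dvd int (kb' - kb)"
        using pm coprime_dvd_mult_left_iff[OF cop, of "int (kb' - kb)"] unfolding diff by simp
      hence "p ^ m dvd (kb' - kb)" by (metis of_nat_dvd_iff of_nat_power)
      hence A: "p ^ m \<le> kb' - kb" using kbgt by (intro dvd_imp_le) auto
      have "dur p a s k' < n" using mnz unfolding mn_def by (auto split: if_splits)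
      hence "dur p a s k' < dIw p a s k" using n2 by simp
      moreover have "eta p a s k' \<ge> 0" unfolding eta_def by simp
      ultimately have "2 * qur p a s k' + 1 < 2 * int kb + 2"
        unfolding dur_def dIw_def kbk by simp
      hence q: "qur p a s k' \<le> int kb" by simp
      hence "(real kb' - real (t1 p a s)) / real (p + 1) < real kb + 1"
        unfolding qur_def kbk' by linarith
      hence "real kb' - real (t1 p a s) < (real kb + 1) * real (p + 1)"
        by (simp add: divide_less_eq)
      hence "real kb' < (real kb + 1) * real (p + 1) + real p" using t1le by linarith
      hence "real kb' < real ((kb + 1) * (p + 1) + p)" by (simp add: algebra_simps)
      hence "kb' < (kb + 1) * (p + 1) + p" by (simp only: of_nat_less_iff)
      hence B: "kb' - kb < kb * p + 2 * p + 1" by (simp add: algebra_simps)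
      have "kb * p + 2 * p + 1 \<le> p * p * kb"
      proof -
        have e: "p * p * kb = kb * p + p * ((p - 1) * kb)" using ppos
          by (simp add: algebra_simps diff_mult_distrib2)
        have c1: "4 * 1 \<le> (p - 1) * kb" using assms by (intro mult_le_mono) auto
        have c2: "p * (4 * 1) \<le> p * ((p - 1) * kb)" using c1 by (rule mult_le_mono2)
        have c3: "2 * p + 1 \<le> p * (4 * 1)" using assms by simp
        show ?thesis using e c2 c3 by linarith
      qed
      hence "p ^ m < p * p * kb" using A B by simp
      also have "p * p * kb < p * p * p ^ (L + 1)" using Lb ppos by simp
      also have "\<dots> = p ^ (L + 3)" by (simp add: power_add eval_nat_numeral)
      finally show ?thesis .
    qed
    hence "m < L + 3" using assms by (simp add: power_strict_increasing_iff)
    thus ?thesis unfolding vw_def m_def by simp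
  qed
  show ?thesis
    unfolding MM_def K_def[symmetric] k_def[symmetric] L_def[symmetric]
    by (rule Sup_least) (auto intro!: bound)
qed

end
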